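(* In the setting of the context, the involute $N$ (the closed polygonal curve formed by the segments $N_{i-\frac12}N_{i+\frac12}$), together with the region $\overline N$ bounded by it, is contained in the region $\overline M$ bounded by the central equidistant $M$.
   Context: $[x,y]$ denotes the determinant of the matrix with columns $x,y\in\mathbb{R}^2$. Fix $n\ge2$; indices (integer and half-integer) are read modulo $2n$. $U$ is a convex $2n$-gon with distinct vertices $U_1,\dots,U_{2n}$ in counterclockwise order with $U_{i+n}=-U_i$, and $V_{i+\frac12}=(U_{i+1}-U_i)/[U_i,U_{i+1}]$. Let $c>0$ and let $P$ be a convex polygon with nonempty interior and vertex list $P_1,\dots,P_{2n}$ (listed counterclockwise, consecutive entries may coincide) with $P_{i+1}-P_i$ a nonnegative multiple of $V_{i+\frac12}$ and $P_i-P_{i+n}=2cU_i$ for all $i$. The central equidistant $M$ is the closed polygonal curve with vertices $M_i=\frac12(P_i+P_{i+n})$; define $\alpha_{i+\frac12}$ by $M_{i+1}-M_i=\alpha_{i+\frac12}(U_{i+1}-U_i)$, $\beta_i=\frac12\sum_{j=i}^{i+n-1}\alpha_{j+\frac12}[U_j,U_{j+1}]$, and the involute $N_{i+\frac12}=M_i+\beta_iV_{i+\frac12}$. For a closed polygonal curve $X$, its exterior is the set of points of the plane that can be joined to a point of (the boundary curve of) $P$ by a continuous path not meeting $X$, and the region $\overline X$ bounded by $X$ is the complement of the exterior. *)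

theory Defs
  imports "HOL-Analysis.Analysis"
begin

text \<open>Points of the plane are vectors of type real^2. Integer and half-integer
indices are encoded by functions on int that are 2n-periodic; a half-integer
index i+1/2 is encoded by the integer i.\<close>

definition det2 :: "real^2 \<Rightarrow> real^2 \<Rightarrow> real" where
  "det2 x y = x$1 * y$2 - y$1 * x$2"

definition Vh :: "(int \<Rightarrow> real^2) \<Rightarrow> int \<Rightarrow> real^2" where
  "Vh U i = (1 / det2 (U i) (U (i+1))) *\<^sub>R (U (i+1) - U i)"

definition Mv :: "(int \<Rightarrow> real^2) \<Rightarrow> nat \<Rightarrow> int \<Rightarrow> real^2" where
  "Mv P n i = (1/2) *\<^sub>R (P i + P (i + int n))"

definition alph :: "(int \<Rightarrow> real^2) \<Rightarrow> (int \<Rightarrow> real^2) \<Rightarrow> nat \<Rightarrow> int \<Rightarrow> real" where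
  "alph U P n i = (THE a. Mv P n (i+1) - Mv P n i = a *\<^sub>R (U (i+1) - U i))"

definition beta :: "(int \<Rightarrow> real^2) \<Rightarrow> (int \<Rightarrow> real^2) \<Rightarrow> nat \<Rightarrow> int \<Rightarrow> real" where
  "beta U P n i = (1/2) * (\<Sum>j\<in>{i..i + int n - 1}. alph U P n j * det2 (U j) (U (j+1)))"

definition Nh :: "(int \<Rightarrow> real^2) \<Rightarrow> (int \<Rightarrow> real^2) \<Rightarrow> nat \<Rightarrow> int \<Rightarrow> real^2" where
  "Nh U P n i = Mv P n i + beta U P n i *\<^sub>R Vh U i"

definition polyline :: "(int \<Rightarrow> real^2) \<Rightarrow> nat \<Rightarrow> (real^2) set" where
  "polyline X m = (\<Union>i\<in>{0..<int m}. closed_segment (X i) (X (i+1)))"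

text \<open>exterior of a curve X relative to the boundary curve B of P, and the region bounded by X\<close>
definition exterior_of :: "(real^2) set \<Rightarrow> (real^2) set \<Rightarrow> (real^2) set" where
  "exterior_of B X = {z. \<exists>g. path g \<and> pathstart g = z \<and> pathfinish g \<in> B \<and> path_image g \<inter> X = {}}"

definition region_of :: "(real^2) set \<Rightarrow> (real^2) set \<Rightarrow> (real^2) set" where
  "region_of B X = - exterior_of B X"

end

theory Submission
  imports Defs "HOL-Complex_Analysis.Complex_Analysis"
begin

lemma lp_wind:
  assumes V: "V \<noteq> 0" and S: "\<forall>x\<in>closed_segment a b. Im ((x - z) / V) \<noteq> 0"
  shows "winding_number (linepath a b) z = (Ln ((b - z)/V) - Ln ((a - z)/V)) / (2*pi*\<i>)"
proof -
  have zn: "z \<notin> path_image (linepath a b)" using S by auto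
  have "((\<lambda>w. 1/(w - z)) has_contour_integral (Ln ((b - z)/V) - Ln ((a - z)/V))) (linepath a b)"
  proof -
    have "((\<lambda>w. Ln ((w - z)/V)) has_field_derivative 1/(w-z)) (at w within {x. Im ((x - z)/V) \<noteq> 0})"
      if "w \<in> {x. Im ((x - z)/V) \<noteq> 0}" for w
    proof -
      have nn: "(w - z)/V \<notin> \<real>\<^sub>\<le>\<^sub>0" using that by (auto simp: complex_nonpos_Reals_iff)
      have wz: "w - z \<noteq> 0" using that by auto
      have "((\<lambda>w. (w - z)/V) has_field_derivative 1/V) (at w)"
        using V by (auto intro!: derivative_eq_intros)
      from DERIV_chain2[OF has_field_derivative_Ln[OF nn] this]
      have "((\<lambda>w. Ln ((w - z)/V)) has_field_derivative inverse ((w - z)/V) * (1/V)) (at w)" .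
      moreover have "inverse ((w - z)/V) * (1/V) = 1/(w-z)" using V wz by (simp add: field_simps)
      ultimately show ?thesis by (metis has_field_derivative_at_within)
    qed
    moreover have "path_image (linepath a b) \<subseteq> {x. Im ((x - z)/V) \<noteq> 0}" using S by auto
    ultimately show ?thesis using contour_integral_primitive[of "{x. Im ((x - z)/V) \<noteq> 0}"] by fastforce
  qed
  then show ?thesis
    using winding_number_valid_path[OF valid_path_linepath zn] contour_integral_unique by fastforce
qed

lemma arg_step:
  assumes e0: "Im e \<noteq> 0" and r: "Im r < 0" and er: "Im (e*r) \<noteq> 0"
  shows "Arg (e*r) = Arg e + Arg r + (if Im e < 0 \<and> Im (e*r) > 0 then 2*pi else 0)"
proof -
  have ne: "e \<noteq> 0" "r \<noteq> 0" using e0 r by auto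
  have A: "Arg x = Im (Ln x)" if "x \<noteq> 0" for x using Arg_eq_Im_Ln that by auto
  have r1: "- pi < Arg r" "Arg r < 0" using mpi_less_Arg Arg_neg_iff r by auto
  have L: "Ln(e * r) = (if Im(Ln e + Ln r) \<le> -pi then (Ln(e) + Ln(r)) + \<i> * of_real(2*pi)
            else if Im(Ln e + Ln r) > pi then (Ln(e) + Ln(r)) - \<i> * of_real(2*pi)
            else Ln(e) + Ln(r))" using Ln_times[OF ne] .
  have Ae: "-pi < Arg e" "Arg e \<le> pi" using mpi_less_Arg Arg_le_pi by auto
  have epi: "Arg e \<noteq> pi" using Arg_eq_pi e0 by auto
  have erpi: "Arg (e*r) \<noteq> pi" "Arg (e*r) \<noteq> 0" using Arg_eq_pi Arg_eq_0 er by (auto simp: complex_is_Real_iff)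
  show ?thesis
  proof (cases "Im e < 0")
    case True
    then have e1: "Arg e < 0" using Arg_neg_iff by auto
    show ?thesis
    proof (cases "Arg e + Arg r \<le> -pi")
      case True
      then have "Arg (e*r) = Arg e + Arg r + 2*pi" using L A ne by (simp add: mult_eq_0_iff)
      moreover then have "Arg (e*r) > 0" using True r1 e1 Ae by linarith
      then have "Im (e*r) > 0" using Arg_neg_iff er by (metis Arg_pos_iff linorder_neqE_linordered_idom)
      ultimately show ?thesis using \<open>Im e < 0\<close> by simp
    next
      case False
      then have "Arg (e*r) = Arg e + Arg r" using L A ne r1 e1 by (simp add: mult_eq_0_iff)
      moreover then have "Arg (e*r) < 0" using r1 e1 by linarith
      then have "Im (e*r) < 0" using Arg_neg_iff by auto
      ultimately show ?thesis by simp
    qed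
  next
    case False
    then have "Im e > 0" using e0 by auto
    then have e1: "0 < Arg e" "Arg e < pi" using Arg_lt_pi by auto
    have "Arg (e*r) = Arg e + Arg r" using L A ne r1 e1 by (simp add: mult_eq_0_iff)
    then show ?thesis using False by simp
  qed
qed

fun ppath :: "(int \<Rightarrow> complex) \<Rightarrow> nat \<Rightarrow> real \<Rightarrow> complex" where
  "ppath w 0 = linepath (w 0) (w 0)"
| "ppath w (Suc k) = ppath w k +++ linepath (w (int k)) (w (int k + 1))"

lemma ppath_basic: "valid_path (ppath w k) \<and> pathstart (ppath w k) = w 0 \<and> pathfinish (ppath w k) = w (int k)"
proof (induction k)
  case 0
  have "valid_path (linepath (w 0) (w 0))" by (rule valid_path_linepath)
  then show ?case by (simp add: linepath_refl pathstart_def pathfinish_def)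
next
  case (Suc k)
  then show ?case by (auto intro!: valid_path_join simp: add.commute)
qed

lemma ppath_path: "path (ppath w k)"
  using ppath_basic valid_path_imp_path by blast

lemma ppath_image: "path_image (ppath w k) = insert (w 0) (\<Union>j<k. closed_segment (w (int j)) (w (int j + 1)))"
proof (induction k)
  case 0 then show ?case by simp
next
  case (Suc k)
  have "path_image (ppath w (Suc k)) = path_image (ppath w k) \<union> closed_segment (w (int k)) (w (int k + 1))"
    using ppath_basic by (simp add: path_image_join)
  then show ?case using Suc by (auto simp: lessThan_Suc)
qed

lemma ppath_wind:
  assumes "z \<notin> path_image (ppath w k)"
  shows "winding_number (ppath w k) z = (\<Sum>j<k. winding_number (linepath (w (int j)) (w (int j + 1))) z)"
  using assms
proof (induction k)
  case 0 then show ?case by (metis lessThan_0 linepath_refl winding_number_trivial ppath.simps(1) sum.empty ppath_image insert_iff)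
next
  case (Suc k)
  have img: "path_image (ppath w (Suc k)) = path_image (ppath w k) \<union> closed_segment (w (int k)) (w (int k + 1))"
    using ppath_basic by (simp add: path_image_join)
  have "winding_number (ppath w (Suc k)) z = winding_number (ppath w k) z + winding_number (linepath (w (int k)) (w (int k + 1))) z"
    using Suc.prems img ppath_basic ppath_path by (auto intro!: winding_number_join)
  then show ?case using Suc img by simp
qed

lemma Im_div_cnj: "Im (y / V) = Im (cnj V * y) / (cmod V)^2"
  by (simp add: complex_div_cnj[of y V] mult.commute Im_divide power2_eq_square)

lemma Im_cnj_swap: "Im (cnj b * a) = - Im (cnj a * b)"
  by (simp add: algebra_simps)

lemma core:
  fixes V w :: "int \<Rightarrow> complex" and m :: nat and z :: complex
  assumes m: "m > 0"
    and Vp: "\<And>j. V (j + int m) = V j" and wp: "\<And>j. w (j + int m) = w j"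
    and Vrot: "\<And>j. Im (cnj (V j) * V (j+1)) > 0"
    and edge: "\<And>j. \<exists>a::real. w (j+1) - w j = of_real a * V j"
    and F: "\<And>j. Im (cnj (V j) * (w j - z)) \<noteq> 0"
  shows "2*pi*Re (winding_number (ppath w m) z) =
     (\<Sum>j<m. - Arg (V (int j) / V (int j + 1)))
     - 2*pi*card {j. j<m \<and> Im (cnj (V (int j)) * (w (int j) - z)) < 0 \<and> Im (cnj (V (int j + 1)) * (w (int j + 1) - z)) > 0}"
proof -
  define Fv where "Fv j = Im (cnj (V j) * (w j - z))" for j
  define s where "s j = (w j - z) / V j" for j
  define e where "e j = (w (j+1) - z) / V j" for j
  have V0: "V j \<noteq> 0" for j using Vrot[of j] by auto
  have seg: "Im (cnj (V j) * (x - z)) = Fv j" if xs: "x \<in> closed_segment (w j) (w (j+1))" for j x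
  proof -
    obtain a :: real where a: "w (j+1) - w j = of_real a * V j" using edge by blast
    obtain u where u: "x = (1 - u) *\<^sub>R w j + u *\<^sub>R w (j+1)" using xs unfolding closed_segment_def by blast
    have "x = w j + of_real (u*a) * V j" using u a by (simp add: scaleR_conv_of_real algebra_simps)
    then have "cnj (V j) * (x - z) = cnj (V j) * (w j - z) + of_real (u*a) * (cnj (V j) * V j)"
      by (simp add: algebra_simps)
    moreover have "Im (of_real (u*a) * (cnj (V j) * V j)) = 0" by (simp add: complex_mult_cnj)
    ultimately show ?thesis by (simp add: Fv_def)
  qed
  have Imq: "Im ((x - z) / V j) \<noteq> 0 \<and> (Im ((x - z) / V j) > 0 \<longleftrightarrow> Fv j > 0) \<and> (Im ((x - z) / V j) < 0 \<longleftrightarrow> Fv j < 0)"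
    if "x \<in> closed_segment (w j) (w (j+1))" for j x
  proof -
    have "Im ((x - z) / V j) = Fv j / (cmod (V j))^2" using seg[OF that] Im_div_cnj by simp
    moreover have "(cmod (V j))^2 > 0" using V0 by simp
    moreover have "Fv j \<noteq> 0" using F Fv_def by simp
    ultimately show ?thesis by (simp add: divide_less_0_iff zero_less_divide_iff)
  qed
  have sI: "Im (s j) \<noteq> 0 \<and> (Im (s j) > 0 \<longleftrightarrow> Fv j > 0) \<and> (Im (s j) < 0 \<longleftrightarrow> Fv j < 0)" for j
    using Imq[of "w j" j] by (simp add: s_def)
  have eI: "Im (e j) \<noteq> 0 \<and> (Im (e j) > 0 \<longleftrightarrow> Fv j > 0) \<and> (Im (e j) < 0 \<longleftrightarrow> Fv j < 0)" for j
    using Imq[of "w (j+1)" j] by (simp add: e_def)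
  have zseg: "z \<notin> closed_segment (w j) (w (j+1))" for j
    using Imq[of z j] by auto
  have zimg: "z \<notin> path_image (ppath w m)"
  proof -
    have "w 0 \<in> closed_segment (w (int 0)) (w (int 0 + 1))" by simp
    then show ?thesis using zseg m by (auto simp: ppath_image)
  qed
  have lw: "winding_number (linepath (w j) (w (j+1))) z = (Ln (e j) - Ln (s j)) / (2*pi*\<i>)" for j
    using lp_wind[OF V0, of "w j" "w (j+1)" z] Imq[of _ j] by (auto simp: e_def s_def)
  have W: "winding_number (ppath w m) z = (\<Sum>j<m. (Ln (e (int j)) - Ln (s (int j))) / (2*pi*\<i>))"
    using ppath_wind[OF zimg] lw by simp
  have ReW: "2*pi*Re (winding_number (ppath w m) z) = (\<Sum>j<m. Arg (e (int j)) - Arg (s (int j)))"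
  proof -
    have "Re ((Ln (e j) - Ln (s j)) / (2*pi*\<i>)) = (Arg (e j) - Arg (s j)) / (2*pi)" for j
    proof -
      have "e j \<noteq> 0" "s j \<noteq> 0" using eI[of j] sI[of j] by auto
      then have "Arg (e j) = Im (Ln (e j))" "Arg (s j) = Im (Ln (s j))" by (auto simp: Arg_eq_Im_Ln)
      then show ?thesis by (simp add: Re_divide power2_eq_square field_simps)
    qed
    then have "Re (winding_number (ppath w m) z) = (\<Sum>j<m. (Arg (e (int j)) - Arg (s (int j))) / (2*pi))"
      by (simp add: W Re_sum)
    then show ?thesis by (simp add: sum_divide_distrib[symmetric])
  qed
  define r where "r j = V j / V (j+1)" for j
  have rI: "Im (r j) < 0" for j
  proof -
    have "Im (r j) = Im (cnj (V (j+1)) * V j) / (cmod (V (j+1)))^2" by (simp add: r_def Im_div_cnj)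
    moreover have "Im (cnj (V (j+1)) * V j) < 0" using Vrot[of j] by (simp add: mult.commute)
    moreover have "(cmod (V (j+1)))^2 > 0" using V0 by simp
    ultimately show ?thesis by (simp add: divide_less_0_iff)
  qed
  have ser: "s (j+1) = e j * r j" for j using V0 by (simp add: s_def e_def r_def)
  have step: "Arg (e j) - Arg (s j) = (Arg (s (j+1)) - Arg (s j)) - Arg (r j) - (if Fv j < 0 \<and> Fv (j+1) > 0 then 2*pi else 0)" for j
  proof -
    have "Arg (s (j+1)) = Arg (e j) + Arg (r j) + (if Im (e j) < 0 \<and> Im (e j * r j) > 0 then 2*pi else 0)"
      using arg_step[of "e j" "r j"] eI rI sI ser by metis
    moreover have "Im (e j * r j) > 0 \<longleftrightarrow> Fv (j+1) > 0" using sI[of "j+1"] unfolding ser by blast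
    moreover have "Im (e j) < 0 \<longleftrightarrow> Fv j < 0" using eI[of j] by blast
    ultimately show ?thesis by (simp add: ser)
  qed
  have tele: "(\<Sum>j<m. Arg (s (int (Suc j))) - Arg (s (int j))) = 0"
    using sum_lessThan_telescope[of "\<lambda>j. Arg (s (int j))" m] wp[of 0] Vp[of 0] by (simp add: s_def)
  have "(\<Sum>j<m. Arg (e (int j)) - Arg (s (int j))) =
        (\<Sum>j<m. Arg (s (int (Suc j))) - Arg (s (int j))) + (\<Sum>j<m. - Arg (r (int j)))
        - (\<Sum>j<m. (if Fv (int j) < 0 \<and> Fv (int j+1) > 0 then 2*pi else 0))"
    by (simp add: step sum.distrib sum_subtractf add.commute sum_negf)
  also have "(\<Sum>j<m. (if Fv (int j) < 0 \<and> Fv (int j+1) > 0 then 2*pi else 0)) =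
      2*pi*card {j. j<m \<and> Fv (int j) < 0 \<and> Fv (int j + 1) > 0}"
  proof -
    have "(\<Sum>j<m. (if Fv (int j) < 0 \<and> Fv (int j+1) > 0 then 2*pi else 0)) = sum (\<lambda>_. 2*pi) {j\<in>{..<m}. Fv (int j) < 0 \<and> Fv (int j+1) > 0}"
      using sum.inter_filter[of "{..<m}" "\<lambda>_. 2*pi" "\<lambda>j. Fv (int j) < 0 \<and> Fv (int j+1) > 0"] by simp
    also have "{j\<in>{..<m}. Fv (int j) < 0 \<and> Fv (int j+1) > 0} = {j. j<m \<and> Fv (int j) < 0 \<and> Fv (int j + 1) > 0}" by auto
    finally show ?thesis by simp
  qed
  finally show ?thesis using ReW tele by (simp add: Fv_def r_def)
qed

lemma dIVT:
  fixes f :: "int \<Rightarrow> real"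
  assumes nz: "\<And>j. f j \<noteq> 0" and a: "f a < 0" and b: "f b > 0" and ab: "a < b"
  shows "\<exists>j. a \<le> j \<and> j < b \<and> f j < 0 \<and> f (j+1) > 0"
proof -
  have "\<forall>a. f a < 0 \<longrightarrow> a < b \<longrightarrow> nat (b - a) = k \<longrightarrow> (\<exists>j. a \<le> j \<and> j < b \<and> f j < 0 \<and> f (j+1) > 0)" for k
  proof (induction k)
    case 0 then show ?case by auto
  next
    case (Suc k)
    show ?case
    proof (intro allI impI)
      fix a assume A: "f a < 0" "a < b" "nat (b - a) = Suc k"
      show "\<exists>j. a \<le> j \<and> j < b \<and> f j < 0 \<and> f (j+1) > 0"
      proof (cases "f (a+1) > 0")
        case True then show ?thesis using A by auto
      next
        case False
        then have "f (a+1) < 0" using nz[of "a+1"] by linarith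
        moreover have "a + 1 < b" using A False b by (cases "a + 1 = b") auto
        moreover have "nat (b - (a+1)) = k" using A by auto
        ultimately obtain j where jj: "a+1 \<le> j \<and> j < b \<and> f j < 0 \<and> f (j+1) > 0" using Suc.IH by blast
        then have "a \<le> j" by simp
        then show ?thesis using jj by blast
      qed
    qed
  qed
  then show ?thesis using a ab by blast
qed

lemma two_trans:
  fixes f :: "int \<Rightarrow> real" and p :: int
  assumes p: "p > 0" and per: "\<And>j. f (j + p) = f j" and nz: "\<And>j. f j \<noteq> 0"
    and ord: "a1 < a2" "a2 < a3" "a3 < a4" "a4 - a1 \<le> p"
    and s: "f a1 < 0" "f a2 > 0" "f a3 < 0" "f a4 > 0"
  shows "card {j. j < nat p \<and> f (int j) < 0 \<and> f (int j + 1) > 0} \<ge> 2"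
proof -
  have pm: "f (x mod p) = f x" for x
  proof -
    have k: "f (y + p * int k) = f y" for y k
    proof (induction k arbitrary: y)
      case (Suc k)
      have "f (y + p * int (Suc k)) = f ((y + p * int k) + p)" by (simp add: algebra_simps)
      then show ?case using per Suc by simp
    qed simp
    have jd: "x = x mod p + p * (x div p)" by simp
    show ?thesis
    proof (cases "x div p \<ge> 0")
      case True
      then have "x = x mod p + p * int (nat (x div p))" using jd by simp
      then show ?thesis using k by metis
    next
      case False
      then have "x mod p = x + p * int (nat (- (x div p)))" using jd by (simp add: algebra_simps)
      then show ?thesis using k by metis
    qed
  qed
  obtain j1 where j1: "a1 \<le> j1" "j1 < a2" "f j1 < 0" "f (j1+1) > 0" using dIVT[OF nz s(1) s(2) ord(1)] by blast
  obtain j2 where j2: "a3 \<le> j2" "j2 < a4" "f j2 < 0" "f (j2+1) > 0" using dIVT[OF nz s(3) s(4) ord(3)] by blast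
  define S where "S = {j. j < nat p \<and> f (int j) < 0 \<and> f (int j + 1) > 0}"
  have inS: "nat (j mod p) \<in> S" if "f j < 0" "f (j+1) > 0" for j
  proof -
    have "0 \<le> j mod p" "j mod p < p" using p by auto
    moreover have "f (j mod p + 1) = f (j + 1)"
      using pm[of "j+1"] pm[of "j mod p + 1"] by (metis mod_add_left_eq)
    ultimately show ?thesis using that pm[of j] by (auto simp: S_def)
  qed
  have ne: "nat (j1 mod p) \<noteq> nat (j2 mod p)"
  proof
    assume "nat (j1 mod p) = nat (j2 mod p)"
    then have "j1 mod p = j2 mod p" using p by (simp add: nat_eq_iff)
    then have "p dvd (j2 - j1)" by (metis mod_eq_dvd_iff)
    moreover have "0 < j2 - j1" "j2 - j1 < p" using j1 j2 ord by auto
    ultimately show False using zdvd_imp_le by fastforce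
  qed
  have "finite S" by (auto simp: S_def)
  moreover have "{nat (j1 mod p), nat (j2 mod p)} \<subseteq> S" using inS j1 j2 by auto
  ultimately have "card {nat (j1 mod p), nat (j2 mod p)} \<le> card S" by (rule card_mono)
  then show ?thesis using ne by (simp add: S_def)
qed

lemma avoid_lines:
  fixes V w :: "'i \<Rightarrow> complex" and J :: "'i set"
  assumes J: "finite J" and V: "\<And>j. j \<in> J \<Longrightarrow> V j \<noteq> 0" and r: "r > 0"
  shows "\<exists>y. cmod (y - z) < r \<and> (\<forall>j\<in>J. Im (cnj (V j) * (w j - y)) \<noteq> 0)"
proof -
  have fin1: "finite ((\<lambda>j. Im (V j) / Re (V j)) ` J)" using J by simp
  obtain t :: real where t: "t \<notin> (\<lambda>j. Im (V j) / Re (V j)) ` J"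
    using fin1 by (metis ex_new_if_finite infinite_UNIV_char_0)
  define u where "u = Complex 1 t"
  have u0: "u \<noteq> 0" by (simp add: u_def complex_eq_iff)
  have cu: "Im (cnj (V j) * u) \<noteq> 0" if "j \<in> J" for j
  proof
    assume "Im (cnj (V j) * u) = 0"
    then have e: "Re (V j) * t = Im (V j)" by (simp add: u_def algebra_simps)
    show False
    proof (cases "Re (V j) = 0")
      case True then show False using e V[OF that] by (simp add: complex_eq_iff)
    next
      case False then have "t = Im (V j) / Re (V j)" using e by (simp add: field_simps)
      then show False using t that by auto
    qed
  qed
  define B where "B = (\<lambda>j. Im (cnj (V j) * (w j - z)) / Im (cnj (V j) * u)) ` J"
  have "finite B" using J by (simp add: B_def)
  moreover have "infinite {0<..<r / cmod u}" using r u0 by simp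
  ultimately obtain \<tau> where tau: "\<tau> \<in> {0<..<r / cmod u}" "\<tau> \<notin> B"
    by (meson finite_subset infinite_super subsetI)
  define y where "y = z + of_real \<tau> * u"
  have "cmod (y - z) = \<tau> * cmod u" using tau by (simp add: y_def norm_mult)
  also have "\<dots> < r" using tau u0 by (simp add: field_simps)
  finally have 1: "cmod (y - z) < r" .
  have 2: "Im (cnj (V j) * (w j - y)) \<noteq> 0" if "j \<in> J" for j
  proof
    assume "Im (cnj (V j) * (w j - y)) = 0"
    then have "Im (cnj (V j) * (w j - z)) - \<tau> * Im (cnj (V j) * u) = 0"
      by (simp add: y_def algebra_simps)
    then have "\<tau> = Im (cnj (V j) * (w j - z)) / Im (cnj (V j) * u)" using cu[OF that] by (simp add: field_simps)
    then show False using tau that by (auto simp: B_def)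
  qed
  show ?thesis using 1 2 by blast
qed

definition c2 :: "real^2 \<Rightarrow> complex" where "c2 x = Complex (x$1) (x$2)"

lemma c2_add[simp]: "c2 (x + y) = c2 x + c2 y" and c2_diff[simp]: "c2 (x - y) = c2 x - c2 y"
  and c2_minus[simp]: "c2 (- x) = - c2 x" and c2_scale[simp]: "c2 (r *\<^sub>R x) = of_real r * c2 x"
  and c2_zero[simp]: "c2 0 = 0"
  by (auto simp: c2_def complex_eq_iff)

lemma linear_c2: "linear c2"
  by (rule linearI) (auto simp: c2_def complex_eq_iff)

lemma c2_inj: "c2 x = c2 y \<longleftrightarrow> x = y"
  by (auto simp: c2_def vec_eq_iff forall_2)

lemma norm_c2[simp]: "cmod (c2 x) = norm x"
  by (simp add: c2_def cmod_def norm_vec_def L2_set_def sum_2)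

lemma dist_c2: "dist (c2 x) (c2 y) = dist x y"
  by (metis c2_diff dist_norm norm_c2)

lemma det2_c2: "det2 x y = Im (cnj (c2 x) * c2 y)"
  by (simp add: det2_def c2_def algebra_simps)

lemma continuous_c2: "continuous_on S c2"
  using linear_c2 linear_continuous_on linear_conv_bounded_linear by blast

lemma c2_segment: "c2 ` closed_segment a b = closed_segment (c2 a) (c2 b)"
  using closed_segment_linear_image[OF linear_c2] by simp

lemma det2_add1: "det2 (x + y) z = det2 x z + det2 y z"
  and det2_add2: "det2 z (x + y) = det2 z x + det2 z y"
  and det2_diff1: "det2 (x - y) z = det2 x z - det2 y z"
  and det2_diff2: "det2 z (x - y) = det2 z x - det2 z y"
  and det2_scale1: "det2 (r *\<^sub>R x) z = r * det2 x z"
  and det2_scale2: "det2 z (r *\<^sub>R x) = r * det2 z x"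
  and det2_neg1: "det2 (- x) z = - det2 x z"
  and det2_neg2: "det2 z (- x) = - det2 z x"
  and det2_swap: "det2 y x = - det2 x y"
  and det2_self: "det2 x x = 0"
  by (auto simp: det2_def algebra_simps)

lemmas det2_simps = det2_add1 det2_add2 det2_diff1 det2_diff2 det2_scale1 det2_scale2 det2_neg1 det2_neg2 det2_self

lemma periodic_mod:
  fixes f :: "int \<Rightarrow> 'a"
  assumes m: "m > 0" and p: "\<And>j. f (j + m) = f j"
  shows "f (j mod m) = f j"
proof -
  have k: "f (x + m * int k) = f x" for x k
  proof (induction k arbitrary: x)
    case (Suc k)
    have "f (x + m * int (Suc k)) = f ((x + m * int k) + m)" by (simp add: algebra_simps)
    then show ?case using p Suc by simp
  qed simp
  have jd: "j = j mod m + m * (j div m)" by simp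
  show ?thesis
  proof (cases "j div m \<ge> 0")
    case True
    then have "j = j mod m + m * int (nat (j div m))" using jd by simp
    then show ?thesis using k by metis
  next
    case False
    then have "j mod m = j + m * int (nat (- (j div m)))" using jd by (simp add: algebra_simps)
    then show ?thesis using k by metis
  qed
qed

lemma int_interval_sum: "(\<Sum>j\<in>{k..k + int n - 1}. f j) = (\<Sum>i<n. f (k + int i))"
proof (induction n)
  case 0 then show ?case by simp
next
  case (Suc n)
  have "{k..k + int (Suc n) - 1} = insert (k + int n) {k..k + int n - 1}" by auto
  then show ?case using Suc by (simp add: add.commute)
qed

locale setting =
  fixes n :: nat and U P :: "int \<Rightarrow> real^2"
  assumes n2: "n \<ge> 2"
    and U_per: "\<And>i. U (i + 2 * int n) = U i"
    and U_sym: "\<And>i. U (i + int n) = - U i"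
    and U_convex_ccw: "\<And>i j. (j - i) mod (2 * int n) \<notin> {0, 1} \<Longrightarrow>
                         det2 (U (i+1) - U i) (U j - U i) > 0"
    and P_per: "\<And>i. P (i + 2 * int n) = P i"
    and P_edges: "\<And>i. \<exists>t\<ge>0. P (i+1) - P i = t *\<^sub>R Vh U i"
begin

definition "dd j = det2 (U j) (U (j+1))"
definition "V j = Vh U j"
definition "M j = Mv P n j"

lemma d_pos: "dd j > 0"
proof -
  have "(j + int n - j) mod (2 * int n) = int n" using n2 by simp
  then have "(j + int n - j) mod (2 * int n) \<notin> {0,1}" using n2 by simp
  from U_convex_ccw[OF this] have "det2 (U (j+1) - U j) (- U j - U j) > 0" using U_sym by simp
  then show ?thesis by (simp add: dd_def det2_def algebra_simps)
qed

lemma d_ne: "dd j \<noteq> 0" using d_pos[of j] by simp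

lemma U_edge: "U (j+1) - U j = dd j *\<^sub>R V j"
  using d_ne[of j] by (simp add: V_def Vh_def dd_def)

lemma V_eq: "V j = (1 / dd j) *\<^sub>R (U (j+1) - U j)"
  by (simp add: V_def Vh_def dd_def)

lemma detUV: "det2 (U j) (V j) = 1" "det2 (U (j+1)) (V j) = 1"
  using d_ne[of j] by (auto simp: V_eq det2_simps dd_def det2_swap[of "U (j+1)" "U j"])

lemma U_symp: "U (j + int n + 1) = - U (j+1)"
  using U_sym[of "j+1"] by (simp add: algebra_simps)

lemma d_per_n: "dd (j + int n) = dd j"
  using U_sym[of j] U_symp[of j] by (simp add: dd_def det2_simps)

lemma V_anti: "V (j + int n) = - V j"
  using U_sym[of j] U_symp[of j] d_per_n[of j] by (simp add: V_eq algebra_simps)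

lemma U_per2: "U (j + 2 * int n + 1) = U (j+1)"
  using U_per[of "j+1"] by (simp add: algebra_simps)

lemma V_per: "V (j + 2 * int n) = V j"
  using U_per[of j] U_per2[of j] by (simp add: V_def Vh_def)

lemma V_rot: "det2 (V j) (V (j+1)) > 0"
proof -
  have "(j + 2 - j) mod (2 * int n) = 2" using n2 by simp
  then have "(j + 2 - j) mod (2 * int n) \<notin> {0,1}" by simp
  from U_convex_ccw[OF this] have h: "det2 (U (j+1) - U j) (U (j+2) - U j) > 0" .
  have "det2 (U (j+1) - U j) (U (j+2) - U (j+1)) = det2 (U (j+1) - U j) (U (j+2) - U j)"
    by (simp add: det2_simps det2_swap[of "U (j+1)" "U j"] det2_swap[of "U (j+2)" "U j"] det2_swap[of "U (j+2)" "U (j+1)"])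
  then have "det2 (U (j+1) - U j) (U (j+1+1) - U (j+1)) > 0" using h by (simp add: add.assoc)
  then have "det2 (dd j *\<^sub>R V j) (dd (j+1) *\<^sub>R V (j+1)) > 0" by (simp only: U_edge)
  then show ?thesis using d_pos[of j] d_pos[of "j+1"] by (simp add: det2_simps zero_less_mult_iff)
qed

lemma conv0: "det2 (U (i+1) - U i) (U j - U i) \<ge> 0"
proof (cases "(j - i) mod (2 * int n) \<in> {0, 1}")
  case False then show ?thesis using U_convex_ccw[OF False] by simp
next
  case True
  have p: "U (x mod (2 * int n)) = U x" for x using periodic_mod[of "2 * int n" U x] U_per n2 by simp
  have "j = i + (j - i)" by simp
  then have "U j = U (i + (j - i) mod (2 * int n))"
    using p[of j] p[of "i + (j - i) mod (2 * int n)"] by (metis mod_add_right_eq)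
  then have "U j = U i \<or> U j = U (i+1)" using True by auto
  then show ?thesis by (auto simp: det2_simps det2_self det2_swap[of "U (i+1)" "U i"])
qed
end

context setting begin

definition "tt j = (SOME t. t \<ge> 0 \<and> P (j+1) - P j = t *\<^sub>R Vh U j)"

lemma P_edge: "P (j+1) - P j = tt j *\<^sub>R V j"
  using someI_ex[OF P_edges[of j]] by (simp add: tt_def V_def)

lemma M_per_n: "M (j + int n) = M j"
  using P_per[of j] by (simp add: M_def Mv_def algebra_simps mult_2)

lemma M_per: "M (j + 2 * int n) = M j"
  using M_per_n[of j] M_per_n[of "j + int n"] by (simp add: algebra_simps mult_2)

lemma V_ne: "V j \<noteq> 0"
  using V_rot[of j] by (auto simp: det2_def)

lemma M_edge0: "M (j+1) - M j = ((tt j - tt (j + int n)) / 2) *\<^sub>R V j"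
proof -
  have "M (j+1) - M j = (1/2) *\<^sub>R ((P (j+1) - P j) + (P (j + int n + 1) - P (j + int n)))"
    by (simp add: M_def Mv_def algebra_simps)
  also have "\<dots> = (1/2) *\<^sub>R (tt j *\<^sub>R V j + tt (j + int n) *\<^sub>R V (j + int n))"
    using P_edge[of j] P_edge[of "j + int n"] by simp
  also have "\<dots> = ((tt j - tt (j + int n)) / 2) *\<^sub>R V j"
    by (simp add: V_anti algebra_simps diff_divide_distrib)
  finally show ?thesis .
qed

lemma alph_eq: "M (j+1) - M j = alph U P n j *\<^sub>R (U (j+1) - U j)"
proof -
  let ?a = "(tt j - tt (j + int n)) / 2 / dd j"
  have ex: "Mv P n (j+1) - Mv P n j = ?a *\<^sub>R (U (j+1) - U j)"
    using M_edge0[of j] U_edge[of j] d_ne[of j] by (simp add: M_def)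
  have ne: "U (j+1) - U j \<noteq> 0" using U_edge[of j] d_ne[of j] V_ne[of j] by simp
  have "\<exists>!a. Mv P n (j+1) - Mv P n j = a *\<^sub>R (U (j+1) - U j)"
  proof (rule ex1I[of _ ?a])
    show "Mv P n (j+1) - Mv P n j = ?a *\<^sub>R (U (j+1) - U j)" by (rule ex)
    fix b assume "Mv P n (j+1) - Mv P n j = b *\<^sub>R (U (j+1) - U j)"
    then show "b = ?a" using ex ne by (metis scaleR_cancel_right)
  qed
  from theI'[OF this] show ?thesis by (simp add: alph_def M_def)
qed

definition "aa j = alph U P n j * dd j"

lemma M_edge: "M (j+1) - M j = aa j *\<^sub>R V j"
  using alph_eq[of j] U_edge[of j] by (simp add: aa_def)

lemma aa_anti: "aa (j + int n) = - aa j"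
proof -
  have "M (j + int n + 1) - M (j + int n) = M (j+1) - M j"
    using M_per_n[of j] M_per_n[of "j+1"] by (simp add: algebra_simps)
  then have "aa (j + int n) *\<^sub>R V (j + int n) = aa j *\<^sub>R V j" by (simp add: M_edge)
  then have "(- aa (j + int n)) *\<^sub>R V j = aa j *\<^sub>R V j" by (simp add: V_anti)
  then show ?thesis using V_ne[of j] scaleR_cancel_right by (metis minus_equation_iff)
qed

lemma beta_sum: "beta U P n j = (1/2) * (\<Sum>i<n. aa (j + int i))"
  unfolding beta_def using int_interval_sum[of "\<lambda>j. alph U P n j * det2 (U j) (U (j+1))" j n]
  by (simp add: aa_def dd_def)

lemma beta_step: "beta U P n (j+1) = beta U P n j - aa j"
proof -
  have "(\<Sum>i<Suc n. aa (j + int i)) = aa j + (\<Sum>i<n. aa (j + 1 + int i))"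
    by (subst sum.lessThan_Suc_shift) (simp add: algebra_simps)
  moreover have "(\<Sum>i<Suc n. aa (j + int i)) = (\<Sum>i<n. aa (j + int i)) + aa (j + int n)" by simp
  ultimately have "(\<Sum>i<n. aa (j + 1 + int i)) = (\<Sum>i<n. aa (j + int i)) - 2 * aa j"
    using aa_anti[of j] by simp
  then show ?thesis by (simp add: beta_sum algebra_simps)
qed

lemma Nh_alt: "Nh U P n j = M (j+1) + beta U P n (j+1) *\<^sub>R V j"
proof -
  have "Nh U P n j = M j + beta U P n j *\<^sub>R V j" by (simp add: Nh_def M_def V_def)
  also have "M j = M (j+1) - aa j *\<^sub>R V j" using M_edge[of j] by (simp add: algebra_simps)
  finally have "Nh U P n j = M (j+1) + (beta U P n j - aa j) *\<^sub>R V j" by (simp add: algebra_simps)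
  then show ?thesis by (simp add: beta_step)
qed

lemma Nh_main: "Nh U P n j = M j + beta U P n j *\<^sub>R V j"
  by (simp add: Nh_def M_def V_def)

end

lemma Im_cnj_inner: "Im (cnj a * (x - b)) = inner (Complex (- Im a) (Re a)) x - inner (Complex (- Im a) (Re a)) b"
  by (simp add: inner_complex_def algebra_simps)

lemma convex_Imhalf: "convex {x. Im (cnj a * (x - b)) \<ge> 0}"
proof -
  have "{x. Im (cnj a * (x - b)) \<ge> 0} = {x. inner (Complex (- Im a) (Re a)) x \<ge> inner (Complex (- Im a) (Re a)) b}"
    by (auto simp: inner_complex_def algebra_simps)
  then show ?thesis using convex_halfspace_ge by metis
qed

context setting begin

definition "Uc j = c2 (U j)"
definition "Vc j = c2 (V j)"
definition "Mc j = c2 (M j)"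

lemma core_hyps:
  "\<And>j. Vc (j + int (2*n)) = Vc j" "\<And>j. Uc (j + int (2*n)) = Uc j" "\<And>j. Mc (j + int (2*n)) = Mc j"
  "\<And>j. Im (cnj (Vc j) * Vc (j+1)) > 0"
  "\<And>j. \<exists>a::real. Uc (j+1) - Uc j = of_real a * Vc j"
  "\<And>j. \<exists>a::real. Mc (j+1) - Mc j = of_real a * Vc j"
proof -
  fix j
  show "Vc (j + int (2*n)) = Vc j" using V_per by (simp add: Vc_def)
  show "Uc (j + int (2*n)) = Uc j" using U_per by (simp add: Uc_def)
  show "Mc (j + int (2*n)) = Mc j" using M_per by (simp add: Mc_def)
  show "Im (cnj (Vc j) * Vc (j+1)) > 0" using V_rot[of j] by (simp add: Vc_def det2_c2)
  show "\<exists>a::real. Uc (j+1) - Uc j = of_real a * Vc j"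
    using U_edge[of j] by (metis Uc_def Vc_def c2_diff c2_scale)
  show "\<exists>a::real. Mc (j+1) - Mc j = of_real a * Vc j"
    using M_edge[of j] by (metis Mc_def Vc_def c2_diff c2_scale)
qed

lemma F_conv: "Im (cnj (c2 a) * (c2 b - c2 y)) = det2 a (b - y)"
  by (metis c2_diff det2_c2)

lemma T_eq: "(\<Sum>j<2*n. - Arg (Vc (int j) / Vc (int j + 1))) = 2*pi"
proof -
  define mid where "mid = (1/2) *\<^sub>R (U 0 + U 1)"
  define F0 where "F0 j = det2 (V j) (U j - mid)" for j
  have F0neg: "F0 j < 0" if j: "1 \<le> j" "j \<le> 2 * int n - 1" for j
  proof -
    have e: "U (j+1) - U j = dd j *\<^sub>R V j" by (rule U_edge)
    have ee: "det2 (U (j+1) - U j) x = dd j * det2 (V j) x" for x by (simp add: e det2_simps)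
    have eqm: "U j - mid = - ((1/2) *\<^sub>R ((U 0 - U j) + (U 1 - U j)))" by (simp add: mid_def vec_eq_iff field_simps)
    have h1: "F0 j = -(1/2) * (det2 (V j) (U 0 - U j) + det2 (V j) (U 1 - U j))"
      unfolding F0_def eqm by (simp only: det2_scale2 det2_add2 det2_neg2)
    have h2: "det2 (V j) x = det2 (U (j+1) - U j) x / dd j" for x using ee[of x] d_ne[of j] by simp
    have "F0 j = - (1 / (2 * dd j)) * (det2 (U (j+1) - U j) (U 0 - U j) + det2 (U (j+1) - U j) (U 1 - U j))"
      unfolding h1 h2 using d_ne[of j] by (simp add: field_simps)
    moreover have "det2 (U (j+1) - U j) (U 0 - U j) + det2 (U (j+1) - U j) (U 1 - U j) > 0"
    proof (cases "(0 - j) mod (2 * int n) \<in> {0,1}")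
      case False
      then show ?thesis using U_convex_ccw[OF False] conv0[of j 1] by linarith
    next
      case True
      have "(0 - j) mod (2 * int n) = 2 * int n - j" using j by (simp add: mod_pos_pos_trivial zmod_zminus1_eq_if)
      then have "j = 2 * int n - 1" using True j n2 by auto
      then have "1 - j = 2 - 2 * int n" by simp
      then have "(1 - j) mod (2 * int n) = 2 mod (2 * int n)" using minus_mod_self2 by metis
      then have "(1 - j) mod (2 * int n) = 2" using n2 by simp
      then have "(1 - j) mod (2 * int n) \<notin> {0,1}" by simp
      from U_convex_ccw[OF this] show ?thesis using conv0[of j 0] by linarith
    qed
    moreover have "dd j > 0" by (rule d_pos)
    ultimately show ?thesis by (simp add: mult_pos_pos)
  qed
  define S where "S = (\<lambda>j. - F0 j / (1 + \<bar>det2 (V j) (U 0)\<bar>)) ` {1 .. 2 * int n - 1}"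
  have Sfin: "finite S" "S \<noteq> {}" using n2 by (auto simp: S_def)
  have Spos: "\<forall>x\<in>S. x > 0"
  proof
    fix x assume "x \<in> S"
    then obtain j where j: "1 \<le> j" "j \<le> 2 * int n - 1" and x: "x = - F0 j / (1 + \<bar>det2 (V j) (U 0)\<bar>)" by (auto simp: S_def)
    have "- F0 j > 0" using F0neg[OF j] by simp
    moreover have "1 + \<bar>det2 (V j) (U 0)\<bar> > 0" by (simp add: add_pos_nonneg)
    ultimately show "x > 0" using x by (simp add: divide_neg_pos)
  qed
  define \<epsilon> where "\<epsilon> = Min S / 2"
  have eps: "\<epsilon> > 0" using Sfin Spos by (simp add: \<epsilon>_def)
  define y where "y = mid + \<epsilon> *\<^sub>R U 0"
  define FU where "FU j = det2 (V j) (U j - y)" for j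
  have FU0: "FU 0 = \<epsilon>"
  proof -
    have "U 0 - y = - ((1/2) * dd 0) *\<^sub>R V 0 - \<epsilon> *\<^sub>R U 0"
    proof -
      have u1: "U 1 = U 0 + dd 0 *\<^sub>R V 0" using U_edge[of 0] by (simp add: algebra_simps)
      show ?thesis unfolding y_def mid_def u1 by (simp add: vec_eq_iff field_simps)
    qed
    then show ?thesis using detUV(1)[of 0] by (simp add: FU_def det2_simps det2_swap[of "V 0" "U 0"])
  qed
  have FUneg: "FU j < 0" if j: "1 \<le> j" "j \<le> 2 * int n - 1" for j
  proof -
    have "FU j = F0 j - \<epsilon> * det2 (V j) (U 0)" by (simp add: FU_def F0_def y_def det2_simps)
    moreover have "\<epsilon> * \<bar>det2 (V j) (U 0)\<bar> < - F0 j"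
    proof -
      have "Min S \<le> - F0 j / (1 + \<bar>det2 (V j) (U 0)\<bar>)" using Sfin j by (auto simp: S_def intro!: Min_le)
      then have "\<epsilon> * (1 + \<bar>det2 (V j) (U 0)\<bar>) \<le> - F0 j / 2"
        by (simp add: \<epsilon>_def field_simps add_pos_nonneg)
      then show ?thesis using F0neg[OF j] eps by (simp add: algebra_simps)
    qed
    ultimately show ?thesis by (smt (verit) abs_ge_self abs_minus_cancel mult_minus_right mult_le_cancel_left_pos eps)
  qed
  have FUper: "FU (j + 2 * int n) = FU j" for j using V_per U_per by (simp add: FU_def)
  have FUnz: "FU j \<noteq> 0" for j
  proof -
    have "FU j = FU (j mod (2 * int n))" using periodic_mod[of "2 * int n" FU j] FUper n2 by simp
    moreover have "0 \<le> j mod (2 * int n)" "j mod (2 * int n) < 2 * int n" using n2 by auto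
    ultimately show ?thesis using FU0 eps FUneg[of "j mod (2 * int n)"]
      by (cases "j mod (2 * int n) = 0") auto
  qed
  have Fc: "Im (cnj (Vc j) * (Uc j - c2 y)) = FU j" for j unfolding Vc_def Uc_def FU_def F_conv ..
  have cnt: "{j. j < 2*n \<and> Im (cnj (Vc (int j)) * (Uc (int j) - c2 y)) < 0 \<and> Im (cnj (Vc (int j + 1)) * (Uc (int j + 1) - c2 y)) > 0} = {2*n - 1}"
  proof -
    have "FU (int (2*n - 1) + 1) > 0" using FU0 FUper[of 0] eps n2 by (simp add: of_nat_diff)
    moreover have "FU (int (2*n - 1)) < 0" using FUneg n2 by (simp add: of_nat_diff)
    moreover have "\<not> (FU (int j + 1) > 0)" if "j < 2*n - 1" for j
    proof -
      have "int j + 1 \<le> 2 * int n - 1" using that by linarith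
      then show ?thesis using FUneg[of "int j + 1"] by simp
    qed
    ultimately show ?thesis unfolding Fc
    proof (intro set_eqI iffI)
      fix j assume A: "j \<in> {j. j < 2 * n \<and> FU (int j) < 0 \<and> 0 < FU (int j + 1)}"
      have "\<not> j < 2*n - 1" using A \<open>\<And>j. j < 2*n - 1 \<Longrightarrow> \<not> (FU (int j + 1) > 0)\<close> by blast
      then show "j \<in> {2 * n - 1}" using A by auto
    next
      fix j assume "j \<in> {2 * n - 1}"
      then show "j \<in> {j. j < 2 * n \<and> FU (int j) < 0 \<and> 0 < FU (int j + 1)}"
        using \<open>FU (int (2*n - 1) + 1) > 0\<close> \<open>FU (int (2*n - 1)) < 0\<close> n2 by auto
    qed
  qed
  have W0: "winding_number (ppath Uc (2*n)) (c2 y) = 0"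
  proof (rule winding_number_zero_outside[OF ppath_path, of "{x. Im (cnj (Vc 0) * (x - Uc 0)) \<ge> 0}"])
    show "convex {x. Im (cnj (Vc 0) * (x - Uc 0)) \<ge> 0}" by (rule convex_Imhalf)
    show "pathfinish (ppath Uc (2 * n)) = pathstart (ppath Uc (2 * n))" using ppath_basic core_hyps(2)[of 0] by simp
    show "c2 y \<notin> {x. 0 \<le> Im (cnj (Vc 0) * (x - Uc 0))}"
    proof -
      have "Im (cnj (Vc 0) * (c2 y - Uc 0)) = - FU 0"
        by (simp add: Vc_def Uc_def FU_def det2_c2 algebra_simps)
      then show ?thesis using FU0 eps by simp
    qed
    have inH: "Uc j \<in> {x. 0 \<le> Im (cnj (Vc 0) * (x - Uc 0))}" for j
    proof -
      have "Im (cnj (Vc 0) * (Uc j - Uc 0)) = det2 (V 0) (U j - U 0)" unfolding Vc_def Uc_def F_conv ..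
      also have "\<dots> = (1 / dd 0) * det2 (U 1 - U 0) (U j - U 0)" by (simp add: V_eq det2_simps diff_divide_distrib)
      finally have "Im (cnj (Vc 0) * (Uc j - Uc 0)) = (1 / dd 0) * det2 (U 1 - U 0) (U j - U 0)" .
      moreover have "(1 / dd 0) * det2 (U 1 - U 0) (U j - U 0) \<ge> 0" using conv0[of 0 j] d_pos[of 0] by simp
      ultimately show ?thesis by (simp only: mem_Collect_eq)
    qed
    show "path_image (ppath Uc (2 * n)) \<subseteq> {x. 0 \<le> Im (cnj (Vc 0) * (x - Uc 0))}"
      unfolding ppath_image using inH closed_segment_subset[OF inH inH convex_Imhalf] by auto
  qed
  have C: "2*pi*Re (winding_number (ppath Uc (2*n)) (c2 y)) = (\<Sum>j<2*n. - Arg (Vc (int j) / Vc (int j + 1)))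
     - 2*pi*card {j. j<2*n \<and> Im (cnj (Vc (int j)) * (Uc (int j) - c2 y)) < 0 \<and> Im (cnj (Vc (int j + 1)) * (Uc (int j + 1) - c2 y)) > 0}"
  proof (rule core)
    show "0 < 2*n" using n2 by simp
    show "\<And>j. Vc (j + int (2*n)) = Vc j" by (rule core_hyps)
    show "\<And>j. Uc (j + int (2*n)) = Uc j" by (rule core_hyps)
    show "\<And>j. Im (cnj (Vc j) * Vc (j+1)) > 0" by (rule core_hyps)
    show "\<And>j. \<exists>a::real. Uc (j+1) - Uc j = of_real a * Vc j" by (rule core_hyps)
    show "\<And>j. Im (cnj (Vc j) * (Uc j - c2 y)) \<noteq> 0" unfolding Fc by (rule FUnz)
  qed
  then have "2*pi*Re (winding_number (ppath Uc (2*n)) (c2 y)) = (\<Sum>j<2*n. - Arg (Vc (int j) / Vc (int j + 1))) - 2*pi*card {2*n - 1}"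
    unfolding cnt .
  then show ?thesis using W0 by simp
qed

end

context setting begin

lemma Mimg: "path_image (ppath Mc (2*n)) = c2 ` polyline (Mv P n) (2*n)"
proof -
  have i: "{0..<int (2*n)} = int ` {..<2*n}"
    using image_int_atLeastLessThan[of 0 "2*n"] by (simp add: atLeast0LessThan)
  have "c2 ` polyline (Mv P n) (2*n) = (\<Union>j<2*n. closed_segment (Mc (int j)) (Mc (int j + 1)))"
    unfolding polyline_def i by (auto simp: image_UN c2_segment Mc_def M_def)
  moreover have "Mc 0 \<in> closed_segment (Mc (int 0)) (Mc (int 0 + 1))" by simp
  then have "Mc 0 \<in> (\<Union>j<2*n. closed_segment (Mc (int j)) (Mc (int j + 1)))"
    by (rule UN_I[of 0, rotated]) (use n2 in simp)
  ultimately show ?thesis unfolding ppath_image by (simp add: insert_absorb)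
qed

lemma Mc_anti: "Mc (j + int n) = Mc j" using M_per_n by (simp add: Mc_def)
lemma Vc_anti: "Vc (j + int n) = - Vc j" using V_anti by (simp add: Vc_def)

lemma wind_nz:
  assumes zs: "z \<in> open_segment (Nh U P n (k-1)) (Nh U P n k)"
    and b0: "beta U P n k \<noteq> 0"
    and zM: "z \<notin> polyline (Mv P n) (2*n)"
  shows "winding_number (ppath Mc (2*n)) (c2 z) \<noteq> 0"
proof -
  define b where "b = beta U P n k"
  obtain s where s: "0 < s" "s < 1" and zdef: "z = (1 - s) *\<^sub>R Nh U P n (k-1) + s *\<^sub>R Nh U P n k"
    using zs by (auto simp: in_segment)
  have N1: "Nh U P n (k-1) = M k + b *\<^sub>R V (k-1)" using Nh_alt[of "k-1"] by (simp add: b_def)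
  have N2: "Nh U P n k = M k + b *\<^sub>R V k" using Nh_main[of k] by (simp add: b_def)
  have zeq: "M k - z = - (b * (1 - s)) *\<^sub>R V (k-1) - (b * s) *\<^sub>R V k"
    unfolding zdef N1 N2 by (simp add: algebra_simps scaleR_add_right)
  define Fz where "Fz j = det2 (V j) (M j - z)" for j
  define D where "D = det2 (V (k-1)) (V k)"
  have D: "D > 0" using V_rot[of "k-1"] by (simp add: D_def)
  have Fz_anti: "Fz (j + int n) = - Fz j" for j using M_per_n V_anti by (simp add: Fz_def det2_simps)
  have Fk1: "Fz (k-1) = - b * s * D"
  proof -
    have "M (k-1) = M k - aa (k-1) *\<^sub>R V (k-1)" using M_edge[of "k-1"] by (simp add: algebra_simps)
    then have "M (k-1) - z = (M k - z) - aa (k-1) *\<^sub>R V (k-1)" by simp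
    then show ?thesis unfolding Fz_def zeq D_def by (simp add: det2_simps)
  qed
  have Fk: "Fz k = b * (1 - s) * D"
    unfolding Fz_def zeq D_def by (simp add: det2_simps det2_swap[of "V k" "V (k-1)"])
  define H where "H j = det2 (U j) (M j - z)" for j
  have Hstep: "H (j+1) - H j = dd j * Fz j + aa j" for j
  proof -
    have "H (j+1) = det2 (U (j+1)) (M j - z) + aa j * det2 (U (j+1)) (V j)"
      unfolding H_def using M_edge[of j] by (simp add: algebra_simps det2_simps)
    also have "det2 (U (j+1)) (M j - z) = H j + det2 (U (j+1) - U j) (M j - z)"
      by (simp add: H_def det2_simps)
    also have "det2 (U (j+1) - U j) (M j - z) = dd j * Fz j" by (simp add: U_edge Fz_def det2_simps right_diff_distrib)
    finally show ?thesis using detUV(2)[of j] by simp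
  qed
  have Hk: "H k = - b"
  proof -
    have "det2 (U k) (V (k-1)) = 1" using detUV(2)[of "k-1"] by simp
    then show ?thesis unfolding H_def zeq using detUV(1)[of k] by (simp add: det2_simps algebra_simps)
  qed
  have Hkn: "H (k + int n) = - H k" using U_sym[of k] M_per_n[of k] by (simp add: H_def det2_simps)
  have tel: "(\<Sum>i<n. H (k + int (Suc i)) - H (k + int i)) = H (k + int n) - H k"
    using sum_lessThan_telescope[of "\<lambda>i. H (k + int i)" n] by simp
  have "(\<Sum>i<n. H (k + int (Suc i)) - H (k + int i)) = (\<Sum>i<n. dd (k + int i) * Fz (k + int i)) + (\<Sum>i<n. aa (k + int i))"
  proof -
    have "H (k + int (Suc i)) - H (k + int i) = dd (k + int i) * Fz (k + int i) + aa (k + int i)" for i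
    proof -
      have "k + int (Suc i) = (k + int i) + 1" by simp
      show ?thesis using Hstep[of "k + int i"] by (simp only: \<open>k + int (Suc i) = k + int i + 1\<close>)
    qed
    then show ?thesis by (simp add: sum.distrib)
  qed
  moreover have "(\<Sum>i<n. aa (k + int i)) = 2 * b" using beta_sum[of k] by (simp add: b_def)
  ultimately have ident: "(\<Sum>i<n. dd (k + int i) * Fz (k + int i)) = 0" using tel Hkn Hk by simp
  have bsq: "b * b > 0"
  proof -
    have "b \<noteq> 0" using b0 by (simp add: b_def)
    then show ?thesis by (cases "b > 0") (auto simp: mult_neg_neg)
  qed
  have "\<exists>i. i < n \<and> b * Fz (k + int i) < 0"
  proof (rule ccontr)
    assume A: "\<not> (\<exists>i. i < n \<and> b * Fz (k + int i) < 0)"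
    have nn: "b * Fz (k + int i) \<ge> 0" if "i < n" for i using A that by (meson not_le)
    have "b * Fz (k + int 0) \<le> (\<Sum>i<n. dd (k + int i) * (b * Fz (k + int i))) / dd k"
    proof -
      have "dd (k + int 0) * (b * Fz (k + int 0)) \<le> (\<Sum>i<n. dd (k + int i) * (b * Fz (k + int i)))"
      proof (rule member_le_sum)
        show "0 \<in> {..<n}" using n2 by simp
        show "finite {..<n}" by simp
        fix x assume "x \<in> {..<n} - {0}"
        then have "b * Fz (k + int x) \<ge> 0" using nn by simp
        moreover have "dd (k + int x) > 0" by (rule d_pos)
        ultimately show "0 \<le> dd (k + int x) * (b * Fz (k + int x))" by simp
      qed
      then show ?thesis using d_pos[of k] by (simp add: field_simps)
    qed
    also have "(\<Sum>i<n. dd (k + int i) * (b * Fz (k + int i))) = b * (\<Sum>i<n. dd (k + int i) * Fz (k + int i))"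
      by (simp add: sum_distrib_left algebra_simps)
    finally have "b * Fz k \<le> 0" using ident by simp
    moreover have "b * Fz k = (b * b) * (1 - s) * D" unfolding Fk by (simp add: algebra_simps)
    moreover have "(b * b) * (1 - s) * D > 0" using bsq s D by simp
    ultimately show False by simp
  qed
  then obtain i where i: "i < n" "b * Fz (k + int i) < 0" by blast
  have Fkn1: "Fz (k + int n - 1) = b * s * D" using Fz_anti[of "k-1"] Fk1 by (simp add: algebra_simps)
  have i0: "i \<noteq> 0"
  proof
    assume "i = 0"
    then have e: "b * Fz (k + int i) = (b * b) * (1 - s) * D" by (simp add: Fk algebra_simps)
    have "(b * b) * (1 - s) * D > 0" using bsq s D by simp
    then show False using e i(2) by linarith
  qed
  have i1: "int i \<noteq> int n - 1"
  proof
    assume "int i = int n - 1"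
    then have "k + int i = k + int n - 1" by simp
    then have e: "b * Fz (k + int i) = (b * b) * s * D" unfolding \<open>k + int i = k + int n - 1\<close> Fkn1 by (simp add: algebra_simps)
    have "(b * b) * s * D > 0" using bsq s D by simp
    then show False using e i(2) by linarith
  qed
  define Fc where "Fc j y = Im (cnj (Vc j) * (Mc j - y))" for j y
  have Fcz: "Fc j (c2 z) = Fz j" for j unfolding Fc_def Fz_def Vc_def Mc_def F_conv ..
  have Fc_anti: "Fc (j + int n) y = - Fc j y" for j y using Mc_anti Vc_anti by (simp add: Fc_def)
  have Fc_per: "Fc (j + 2 * int n) y = Fc j y" for j y using core_hyps(1,3)[of j] by (simp add: Fc_def)
  have zimg: "c2 z \<notin> path_image (ppath Mc (2*n))" using zM c2_inj by (auto simp: Mimg)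
  have cl: "closed (path_image (ppath Mc (2*n)))" using ppath_path closed_path_image by blast
  obtain r0 where r0: "r0 > 0" "ball (c2 z) r0 \<inter> path_image (ppath Mc (2*n)) = {}"
    using cl zimg open_contains_ball[of "- path_image (ppath Mc (2*n))"] by (force simp: open_Compl)
  have loop: "pathfinish (ppath Mc (2*n)) = pathstart (ppath Mc (2*n))" using ppath_basic core_hyps(3)[of 0] by simp
  have wconst: "winding_number (ppath Mc (2*n)) y = winding_number (ppath Mc (2*n)) (c2 z)" if "y \<in> ball (c2 z) r0" for y
  proof -
    have "winding_number (ppath Mc (2*n)) constant_on ball (c2 z) r0"
      by (rule winding_number_constant[OF ppath_path loop]) (use r0 in auto)
    then show ?thesis using that r0 by (auto simp: constant_on_def)
  qed
  define J3 where "J3 = {k - 1, k, k + int i}"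
  have Fz3: "Fz j \<noteq> 0" if "j \<in> J3" for j
  proof -
    have "Fz (k-1) \<noteq> 0" using Fk1 b0 s D by (simp add: b_def)
    moreover have "Fz k \<noteq> 0" using Fk b0 s D by (simp add: b_def)
    moreover have "Fz (k + int i) \<noteq> 0" using i(2) by auto
    ultimately show ?thesis using that by (auto simp: J3_def)
  qed
  have Vcn: "cmod (Vc j) > 0" for j using V_ne[of j] by (simp add: Vc_def)
  define r where "r = Min (insert r0 ((\<lambda>j. \<bar>Fz j\<bar> / cmod (Vc j)) ` J3))"
  have r: "r > 0"
  proof -
    have "finite (insert r0 ((\<lambda>j. \<bar>Fz j\<bar> / cmod (Vc j)) ` J3))" by (simp add: J3_def)
    moreover have "\<forall>a\<in>insert r0 ((\<lambda>j. \<bar>Fz j\<bar> / cmod (Vc j)) ` J3). 0 < a"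
      using r0 Fz3 Vcn by auto
    ultimately show ?thesis unfolding r_def by (subst Min_gr_iff) auto
  qed
  have finR: "finite (insert r0 ((\<lambda>j. \<bar>Fz j\<bar> / cmod (Vc j)) ` J3))" by (simp add: J3_def)
  have rle1: "r \<le> r0" unfolding r_def using finR by (rule Min_le) simp
  have rle2: "r \<le> \<bar>Fz j\<bar> / cmod (Vc j)" if "j \<in> J3" for j unfolding r_def using finR by (rule Min_le) (use that in simp)
  obtain y where y: "cmod (y - c2 z) < r" "\<forall>j\<in>{0..<2 * int n}. Im (cnj (Vc j) * (Mc j - y)) \<noteq> 0"
    using avoid_lines[where J="{0..<2 * int n}" and V=Vc and w=Mc and z="c2 z" and r=r] r Vcn by force
  have ynz: "Fc j y \<noteq> 0" for j
  proof -
    have "Fc j y = Fc (j mod (2 * int n)) y" using periodic_mod[of "2 * int n" "\<lambda>j. Fc j y" j] Fc_per n2 by simp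
    moreover have "j mod (2 * int n) \<in> {0..<2 * int n}" using n2 by simp
    ultimately show ?thesis using y(2) by (simp add: Fc_def)
  qed
  have sgn: "Fc j y * Fz j > 0" if "j \<in> J3" for j
  proof -
    have "\<bar>Fc j y - Fz j\<bar> = \<bar>Im (cnj (Vc j) * (c2 z - y))\<bar>" unfolding Fcz[symmetric] by (simp add: Fc_def algebra_simps)
    also have "\<dots> \<le> cmod (Vc j) * cmod (c2 z - y)" using abs_Im_le_cmod by (metis complex_mod_cnj norm_mult)
    also have "\<dots> < cmod (Vc j) * r" using y(1) Vcn[of j] by (simp add: norm_minus_commute)
    also have "\<dots> \<le> \<bar>Fz j\<bar>" using rle2[OF that] Vcn[of j] by (simp add: field_simps)
    finally have "\<bar>Fc j y - Fz j\<bar> < \<bar>Fz j\<bar>" .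
    then show ?thesis
    proof -
      assume A: "\<bar>Fc j y - Fz j\<bar> < \<bar>Fz j\<bar>"
      show ?thesis
      proof (cases "Fz j > 0")
        case True then have "Fc j y > 0" using A by linarith
        then show ?thesis using True by simp
      next
        case False then have "Fz j < 0" "Fc j y < 0" using A by linarith+
        then show ?thesis by (simp add: mult_neg_neg)
      qed
    qed
  qed
  have yball: "y \<in> ball (c2 z) r0" using y(1) rle1 by (simp add: dist_norm norm_minus_commute)
  have Cy: "2*pi*Re (winding_number (ppath Mc (2*n)) y) = (\<Sum>j<2*n. - Arg (Vc (int j) / Vc (int j + 1)))
     - 2*pi*card {j. j<2*n \<and> Im (cnj (Vc (int j)) * (Mc (int j) - y)) < 0 \<and> Im (cnj (Vc (int j + 1)) * (Mc (int j + 1) - y)) > 0}"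
  proof (rule core)
    show "0 < 2*n" using n2 by simp
    show "\<And>j. Vc (j + int (2*n)) = Vc j" by (rule core_hyps)
    show "\<And>j. Mc (j + int (2*n)) = Mc j" by (rule core_hyps)
    show "\<And>j. Im (cnj (Vc j) * Vc (j+1)) > 0" by (rule core_hyps)
    show "\<And>j. \<exists>a::real. Mc (j+1) - Mc j = of_real a * Vc j" by (rule core_hyps)
    show "\<And>j. Im (cnj (Vc j) * (Mc j - y)) \<noteq> 0" using ynz by (simp add: Fc_def)
  qed
  have K2: "card {j. j < nat (2 * int n) \<and> Fc (int j) y < 0 \<and> Fc (int j + 1) y > 0} \<ge> 2"
  proof (cases "b > 0")
    case True
    have s1: "Fc (k-1) y < 0"
    proof -
      have "Fc (k-1) y * Fz (k-1) > 0" using sgn by (simp add: J3_def)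
      moreover have "Fz (k-1) < 0" using Fk1 True s D by (simp add: mult_pos_pos)
      ultimately show ?thesis by (simp add: zero_less_mult_iff)
    qed
    have s2: "Fc k y > 0"
    proof -
      have "Fc k y * Fz k > 0" using sgn by (simp add: J3_def)
      moreover have "Fz k > 0" using Fk True s D by simp
      ultimately show ?thesis by (simp add: zero_less_mult_iff)
    qed
    have s3: "Fc (k + int i) y < 0"
    proof -
      have "Fc (k + int i) y * Fz (k + int i) > 0" using sgn by (simp add: J3_def)
      moreover have "Fz (k + int i) < 0" using i(2) True by (simp add: mult_less_0_iff)
      ultimately show ?thesis by (simp add: zero_less_mult_iff)
    qed
    have s4: "Fc (k + int n - 1) y > 0" using Fc_anti[of "k-1" y] s1 by (simp add: algebra_simps)
    show ?thesis
    proof (rule two_trans[of "2 * int n" "\<lambda>j. Fc j y" "k-1" k "k + int i" "k + int n - 1"])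
      show "0 < 2 * int n" using n2 by simp
      show "\<And>j. Fc (j + 2 * int n) y = Fc j y" by (rule Fc_per)
      show "\<And>j. Fc j y \<noteq> 0" by (rule ynz)
      show "k - 1 < k" by simp
      show "k < k + int i" using i0 by simp
      show "k + int i < k + int n - 1" using i(1) i1 by simp
      show "k + int n - 1 - (k - 1) \<le> 2 * int n" by simp
    qed (use s1 s2 s3 s4 in simp_all)
  next
    case False
    then have bn: "b < 0" using b0 by (simp add: b_def)
    have s1: "Fc k y < 0"
    proof -
      have "Fc k y * Fz k > 0" using sgn by (simp add: J3_def)
      moreover have "Fz k < 0" using Fk bn s D by (simp add: mult_neg_pos)
      ultimately show ?thesis by (simp add: zero_less_mult_iff)
    qed
    have s2: "Fc (k + int i) y > 0"
    proof -
      have "Fc (k + int i) y * Fz (k + int i) > 0" using sgn by (simp add: J3_def)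
      moreover have "Fz (k + int i) > 0" using i(2) bn by (simp add: mult_less_0_iff)
      ultimately show ?thesis by (simp add: zero_less_mult_iff)
    qed
    have s0: "Fc (k-1) y > 0"
    proof -
      have "Fc (k-1) y * Fz (k-1) > 0" using sgn by (simp add: J3_def)
      moreover have "Fz (k-1) > 0"
      proof -
        have "b * s < 0" using bn s by (simp add: mult_neg_pos)
        then have "b * s * D < 0" using D by (simp add: mult_neg_pos)
        then show ?thesis using Fk1 by simp
      qed
      ultimately show ?thesis by (simp add: zero_less_mult_iff)
    qed
    have s3: "Fc (k + int n - 1) y < 0" using Fc_anti[of "k-1" y] s0 by (simp add: algebra_simps)
    have s4: "Fc (k + int n) y > 0" using Fc_anti[of k y] s1 by simp
    show ?thesis
    proof (rule two_trans[of "2 * int n" "\<lambda>j. Fc j y" k "k + int i" "k + int n - 1" "k + int n"])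
      show "0 < 2 * int n" using n2 by simp
      show "\<And>j. Fc (j + 2 * int n) y = Fc j y" by (rule Fc_per)
      show "\<And>j. Fc j y \<noteq> 0" by (rule ynz)
      show "k < k + int i" using i0 by simp
      show "k + int i < k + int n - 1" using i(1) i1 by simp
      show "k + int n - 1 < k + int n" by simp
      show "k + int n - k \<le> 2 * int n" by simp
    qed (use s1 s2 s3 s4 in simp_all)
  qed
  have "Re (winding_number (ppath Mc (2*n)) y) \<le> -1"
  proof -
    have "card {j. j<2*n \<and> Im (cnj (Vc (int j)) * (Mc (int j) - y)) < 0 \<and> Im (cnj (Vc (int j + 1)) * (Mc (int j + 1) - y)) > 0} \<ge> 2"
      using K2 by (simp add: Fc_def nat_mult_distrib)
    then have "2*pi*Re (winding_number (ppath Mc (2*n)) y) \<le> 2*pi - 2*pi*2" using Cy T_eq by simp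
    then have "pi * (Re (winding_number (ppath Mc (2*n)) y) + 1) \<le> 0" by (simp add: algebra_simps)
    then show ?thesis using pi_gt_zero by (auto simp: mult_le_0_iff)
  qed
  then have "winding_number (ppath Mc (2*n)) y \<noteq> 0" by auto
  then show ?thesis using wconst[OF yball] by simp
qed

end

lemma region_sup: "X \<subseteq> region_of B X"
  by (auto simp: region_of_def exterior_of_def path_image_def pathstart_def)
     (metis atLeastAtMost_iff disjoint_iff image_eqI order_refl zero_le_one)

lemma region_closed:
  assumes "closed X" shows "closed (region_of B X)"
proof -
  have "open (exterior_of B X)"
  proof (subst open_contains_ball, intro ballI)
    fix z assume "z \<in> exterior_of B X"
    then obtain g where g: "path g" "pathstart g = z" "pathfinish g \<in> B" "path_image g \<inter> X = {}"
      by (auto simp: exterior_of_def)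
    have zX: "z \<notin> X" using g by (metis disjoint_iff pathstart_in_path_image)
    obtain e where e: "e > 0" "ball z e \<subseteq> - X"
      using assms zX open_contains_ball[of "- X"] by (auto simp: open_Compl)
    have "ball z e \<subseteq> exterior_of B X"
    proof
      fix y assume y: "y \<in> ball z e"
      have "closed_segment y z \<subseteq> ball z e" using y e by (intro closed_segment_subset) auto
      then have "path_image (linepath y z +++ g) \<inter> X = {}"
        using g e by (auto simp: path_image_join)
      then show "y \<in> exterior_of B X" using g unfolding exterior_of_def
        by (intro CollectI exI[of _ "linepath y z +++ g"]) auto
    qed
    then show "\<exists>e>0. ball z e \<subseteq> exterior_of B X" using e by blast
  qed
  then show ?thesis by (simp add: region_of_def closed_Compl)
qed

lemma closed_polyline: "closed (polyline X m)"
  by (auto simp: polyline_def intro!: closed_UN)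

context setting begin

lemma loopM: "pathfinish (ppath Mc (2*n)) = pathstart (ppath Mc (2*n))"
  using ppath_basic core_hyps(3)[of 0] by simp

lemma wind_zero_B:
  assumes Pc: "polyline P (2 * n) = frontier (convex hull (P ` {0..<2 * int n}))"
    and bB: "b \<in> polyline P (2*n)" and bM: "b \<notin> polyline (Mv P n) (2*n)"
  shows "winding_number (ppath Mc (2*n)) (c2 b) = 0"
proof -
  define K where "K = convex hull (P ` {0..<2 * int n})"
  have cK: "convex K" by (simp add: K_def)
  have PK: "P j \<in> K" for j
  proof -
    have "P j = P (j mod (2 * int n))" using periodic_mod[of "2 * int n" P j] P_per n2 by simp
    moreover have "j mod (2 * int n) \<in> {0..<2 * int n}" using n2 by simp
    ultimately show ?thesis unfolding K_def by (metis hull_subset image_eqI subsetD)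
  qed
  have MK: "Mv P n j \<in> K" for j
  proof -
    have "Mv P n j = (1 - 1/2) *\<^sub>R P j + (1/2) *\<^sub>R P (j + int n)" by (simp add: Mv_def algebra_simps)
    then show ?thesis using cK PK convexD[of K "P j" "P (j + int n)" "1 - 1/2" "1/2"] by simp
  qed
  have polyK: "polyline (Mv P n) (2*n) \<subseteq> K"
    unfolding polyline_def using MK cK closed_segment_subset by blast
  have imgK: "path_image (ppath Mc (2*n)) \<subseteq> c2 ` K" using polyK by (auto simp: Mimg)
  have bimg: "c2 b \<notin> path_image (ppath Mc (2*n))" using bM c2_inj by (auto simp: Mimg)
  have cl: "closed (path_image (ppath Mc (2*n)))" using ppath_path closed_path_image by blast
  obtain r0 where r0: "r0 > 0" "ball (c2 b) r0 \<inter> path_image (ppath Mc (2*n)) = {}"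
    using cl bimg open_contains_ball[of "- path_image (ppath Mc (2*n))"] by (force simp: open_Compl)
  have "winding_number (ppath Mc (2*n)) constant_on ball (c2 b) r0"
    by (rule winding_number_constant[OF ppath_path loopM]) (use r0 in auto)
  then obtain wv where wv: "\<And>x. x \<in> ball (c2 b) r0 \<Longrightarrow> winding_number (ppath Mc (2*n)) x = wv"
    by (auto simp: constant_on_def)
  have "b \<in> frontier K" using bB Pc by (simp add: K_def)
  then obtain y where y: "y \<notin> K" "dist b y < r0" using r0 frontier_straddle by metis
  have yb: "c2 y \<in> ball (c2 b) r0" using y by (simp add: dist_c2)
  have "winding_number (ppath Mc (2*n)) (c2 y) = 0"
  proof (rule winding_number_zero_outside[OF ppath_path _ loopM _ imgK])
    show "convex (c2 ` K)" using cK convex_linear_image linear_c2 by blast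
    show "c2 y \<notin> c2 ` K" using y c2_inj by auto
  qed
  moreover have "c2 b \<in> ball (c2 b) r0" using r0 by simp
  ultimately show ?thesis using wv yb by metis
qed

lemma Nsub:
  assumes Pc: "polyline P (2 * n) = frontier (convex hull (P ` {0..<2 * int n}))"
  shows "polyline (Nh U P n) (2*n) \<subseteq> region_of (polyline P (2*n)) (polyline (Mv P n) (2*n))"
proof
  let ?R = "region_of (polyline P (2*n)) (polyline (Mv P n) (2*n))"
  fix z assume "z \<in> polyline (Nh U P n) (2*n)"
  then obtain i where i: "i \<in> {0..<2 * int n}" and z: "z \<in> closed_segment (Nh U P n i) (Nh U P n (i+1))"
    by (auto simp: polyline_def)
  define k where "k = i + 1"
  have Mpoly: "M j \<in> polyline (Mv P n) (2*n)" for j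
  proof -
    have "M j = M (j mod (2 * int n))" using periodic_mod[of "2 * int n" M j] M_per n2 by simp
    moreover have "j mod (2 * int n) \<in> {0..<int (2*n)}" using n2 by simp
    ultimately show ?thesis unfolding polyline_def M_def by force
  qed
  show "z \<in> ?R"
  proof (cases "beta U P n k = 0")
    case True
    have "Nh U P n i = M k" "Nh U P n (i+1) = M k"
      using Nh_alt[of i] Nh_main[of k] True by (simp_all add: k_def)
    then have "z = M k" using z by simp
    then show ?thesis using Mpoly region_sup by blast
  next
    case False
    have e1: "Nh U P n i = M k + beta U P n k *\<^sub>R V i" "Nh U P n (i+1) = M k + beta U P n k *\<^sub>R V k"
      using Nh_alt[of i] Nh_main[of k] by (simp_all add: k_def)
    have ne: "Nh U P n i \<noteq> Nh U P n (i+1)"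
    proof
      assume "Nh U P n i = Nh U P n (i+1)"
      then have "V i = V k" using e1 False by simp
      then show False using V_rot[of i] by (simp add: k_def det2_self)
    qed
    have "open_segment (Nh U P n i) (Nh U P n (i+1)) \<subseteq> ?R"
    proof
      fix w assume w: "w \<in> open_segment (Nh U P n i) (Nh U P n (i+1))"
      show "w \<in> ?R"
      proof (cases "w \<in> polyline (Mv P n) (2*n)")
        case True then show ?thesis using region_sup by blast
      next
        case False
        have wn: "winding_number (ppath Mc (2*n)) (c2 w) \<noteq> 0"
          using wind_nz[of w k] w False \<open>beta U P n k \<noteq> 0\<close> by (simp add: k_def)
        show ?thesis
        proof (rule ccontr)
          assume "w \<notin> ?R"
          then obtain g where g: "path g" "pathstart g = w" "pathfinish g \<in> polyline P (2*n)"
            "path_image g \<inter> polyline (Mv P n) (2*n) = {}"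
            by (auto simp: region_of_def exterior_of_def)
          have pg: "path (c2 \<circ> g)" using g(1) continuous_c2 by (rule path_continuous_image)
          have disj: "path_image (c2 \<circ> g) \<inter> path_image (ppath Mc (2*n)) = {}"
            using g(4) c2_inj by (auto simp: path_image_compose Mimg)
          have "winding_number (ppath Mc (2*n)) constant_on path_image (c2 \<circ> g)"
            by (rule winding_number_constant[OF ppath_path loopM]) (use pg disj in auto)
          moreover have "c2 w \<in> path_image (c2 \<circ> g)" "c2 (pathfinish g) \<in> path_image (c2 \<circ> g)"
            using g(2) pathstart_in_path_image pathfinish_in_path_image
            by (auto simp: path_image_compose)
          ultimately have "winding_number (ppath Mc (2*n)) (c2 w) = winding_number (ppath Mc (2*n)) (c2 (pathfinish g))"
            by (auto simp: constant_on_def)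
          moreover have "pathfinish g \<notin> polyline (Mv P n) (2*n)"
            using g(4) pathfinish_in_path_image by blast
          then have "winding_number (ppath Mc (2*n)) (c2 (pathfinish g)) = 0"
            using wind_zero_B[OF Pc g(3)] by blast
          ultimately show False using wn by simp
        qed
      qed
    qed
    then have "closure (open_segment (Nh U P n i) (Nh U P n (i+1))) \<subseteq> ?R"
      by (rule closure_minimal) (rule region_closed[OF closed_polyline])
    then have "closed_segment (Nh U P n i) (Nh U P n (i+1)) \<subseteq> ?R" using ne by simp
    then show ?thesis using z by blast
  qed
qed

end

theorem proposition4p3:
  fixes n :: nat and c :: real and U P :: "int \<Rightarrow> real^2"
  assumes n2: "n \<ge> 2"
    and cpos: "c > 0"
    and U_per: "\<And>i. U (i + 2 * int n) = U i"
    and U_dist: "inj_on U {0..<2 * int n}"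
    and U_sym: "\<And>i. U (i + int n) = - U i"
    and U_convex_ccw: "\<And>i j. (j - i) mod (2 * int n) \<notin> {0, 1} \<Longrightarrow>
                         det2 (U (i+1) - U i) (U j - U i) > 0"
    and P_per: "\<And>i. P (i + 2 * int n) = P i"
    and P_edges: "\<And>i. \<exists>t\<ge>0. P (i+1) - P i = t *\<^sub>R Vh U i"
    and P_opp: "\<And>i. P i - P (i + int n) = (2 * c) *\<^sub>R U i"
    and P_int: "interior (convex hull (P ` {0..<2 * int n})) \<noteq> {}"
    and P_convex: "polyline P (2 * n) = frontier (convex hull (P ` {0..<2 * int n}))"
  shows "polyline (Nh U P n) (2 * n) \<union> region_of (polyline P (2 * n)) (polyline (Nh U P n) (2 * n))
           \<subseteq> region_of (polyline P (2 * n)) (polyline (Mv P n) (2 * n))"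
proof -
  interpret setting n U P
    by (unfold_locales) (use assms in auto)
  let ?B = "polyline P (2 * n)"
  let ?M = "polyline (Mv P n) (2 * n)"
  let ?N = "polyline (Nh U P n) (2 * n)"
  have NR: "?N \<subseteq> region_of ?B ?M" by (rule Nsub[OF P_convex])
  have "region_of ?B ?N \<subseteq> region_of ?B ?M"
  proof
    fix x assume xN: "x \<in> region_of ?B ?N"
    show "x \<in> region_of ?B ?M"
    proof (rule ccontr)
      assume "x \<notin> region_of ?B ?M"
      then obtain g where g: "path g" "pathstart g = x" "pathfinish g \<in> ?B" "path_image g \<inter> ?M = {}"
        by (auto simp: region_of_def exterior_of_def)
      have "path_image g \<inter> ?N = {}"
      proof (rule ccontr)
        assume "path_image g \<inter> ?N \<noteq> {}"
        then obtain yy where yy: "yy \<in> path_image g" "yy \<in> ?N" by blast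
        then obtain t where t0: "t \<in> {0..1}" "yy = g t" unfolding path_image_def by blast
        then have t: "t \<in> {0..1}" "g t \<in> ?N" using yy by auto
        have "g t \<in> exterior_of ?B ?M"
          unfolding exterior_of_def
        proof (intro CollectI exI[of _ "subpath t 1 g"] conjI)
          show "path (subpath t 1 g)" using g(1) t by simp
          show "pathstart (subpath t 1 g) = g t" by simp
          show "pathfinish (subpath t 1 g) \<in> ?B" using g(3) by (metis pathfinish_subpath pathfinish_def)
          show "path_image (subpath t 1 g) \<inter> ?M = {}"
            using g(4) path_image_subpath_subset[of t 1 g] t by auto
        qed
        then show False using t NR by (auto simp: region_of_def)
      qed
      then have "x \<in> exterior_of ?B ?N" using g unfolding exterior_of_def by blast
      then show False using xN by (simp add: region_of_def)
    qed
  qed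
  then show ?thesis using NR by blast
qed

end
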